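(* Let $\mathfrak L=L_{\boldsymbol m}(\mathfrak g,\boldsymbol\sigma,\mathfrak h)$ be a multiloop Lie algebra, and let $P\in GL_n(\mathbb Z)$ and $\tilde{\boldsymbol m}\in\mathbb Z^n_{>0}$ satisfy $(\boldsymbol\sigma^P)^{\tilde{\boldsymbol m}}=\mathbf{id}$. Then $\mathfrak g^{\boldsymbol\sigma}=\mathfrak g^{\boldsymbol\sigma^P}$, and there exists a group monomorphism $\rho:\langle\mathrm{supp}_{\mathbb Z^n}(\mathfrak L)\rangle\to\mathbb Z^n$ such that $\mathfrak L_{(\rho)}$ is $Q_{\mathfrak h}\times\mathbb Z^n$-graded-isomorphic to $L_{\tilde{\boldsymbol m}}(\mathfrak g,\boldsymbol\sigma^P,\mathfrak h)$.
   Context: $k$ is algebraically closed of characteristic $0$; fixed primitive roots of unity $\zeta_n$ with $\zeta_{mn}^m=\zeta_n$. Multiloop Lie algebra: $\mathfrak g$ finite-dimensional simple over $k$, $\boldsymbol\sigma=(\sigma_1,\dots,\sigma_n)$ pairwise commuting finite-order automorphisms, $\boldsymbol m\in\mathbb Z^n_{>0}$ with $\sigma_i^{m_i}=\mathrm{id}$; for $\lambda=(l_1,\dots,l_n)\in\mathbb Z^n$, $\mathfrak g^{\bar\lambda}=\{g:\sigma_i(g)=\zeta_{m_i}^{l_i}g\ \forall i\}$; $\mathfrak g^{\boldsymbol\sigma}=\mathfrak g^{\bar0}$. If $\mathfrak g^{\boldsymbol\sigma}\ne0$, $\mathfrak h$ is a Cartan subalgebra (maximal ad-diagonalizable subalgebra)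 of $\mathfrak g^{\boldsymbol\sigma}$, acting diagonalizably on $\mathfrak g$ with weight spaces $\mathfrak g_\alpha$, $Q_{\mathfrak h}$ is generated by the nonzero weights, and $L_{\boldsymbol m}(\mathfrak g,\boldsymbol\sigma,\mathfrak h)=\bigoplus_{(\alpha,\lambda)\in Q_{\mathfrak h}\times\mathbb Z^n}(\mathfrak g_\alpha\cap\mathfrak g^{\bar\lambda})\otimes t^\lambda\subseteq\mathfrak g\otimes k[t_1^{\pm1},\dots,t_n^{\pm1}]$; if $\mathfrak g^{\boldsymbol\sigma}=0$, $\mathfrak h=0$, $Q_{\mathfrak h}=\{0\}$ and $L_{\boldsymbol m}(\mathfrak g,\boldsymbol\sigma,\mathfrak h)=\bigoplus_\lambda\mathfrak g^{\bar\lambda}\otimes t^\lambda$. It is $Q_{\mathfrak h}\times\mathbb Z^n$-graded with components $\mathfrak L^\lambda_\alpha$; $\langle\mathrm{supp}_{\mathbb Z^n}(\mathfrak L)\rangle$ is the subgroup generated by $\{\lambda:\mathfrak L^\lambda\ne0\}$. For $P=(p_{ij})$, $\boldsymbol\sigma^P=(\prod_i\sigma_i^{p_{i1}},\dots,\prod_i\sigma_i^{p_{in}})$. For a monomorphism $\rho:\langle\mathrm{supp}_{\mathbb Z^n}(\mathfrak L)\rangle\to\mathbb Z^n$, $\mathfrak L_{(\rho)}$ is $\mathfrak L$ regraded by $(\mathfrak L_{(\rho)})^\lambda_\alpha=\mathfrak L^{\rho^{-1}(\lambda)}_\alpha$ for $\lambda\in\mathrm{Im}\,\rho$ and $0$ otherwise.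 $Q_{\mathfrak h}\times\mathbb Z^n$-graded-isomorphic means there is a Lie algebra isomorphism mapping each $(\alpha,\lambda)$-component onto the $(\alpha,\lambda)$-component. *)

theory Defs
  imports "HOL-Analysis.Analysis" "HOL-Computational_Algebra.Polynomial"
begin

definition alg_closed_field :: "'k::field itself \<Rightarrow> bool" where
  "alg_closed_field _ \<longleftrightarrow> (\<forall>p::'k poly. degree p > 0 \<longrightarrow> (\<exists>x. poly p x = 0))"

definition compatible_roots_of_unity :: "(nat \<Rightarrow> 'k::field) \<Rightarrow> bool" where
  "compatible_roots_of_unity \<zeta> \<longleftrightarrow>
     (\<forall>n>0. \<zeta> n ^ n = 1 \<and> (\<forall>j. 0 < j \<and> j < n \<longrightarrow> \<zeta> n ^ j \<noteq> 1)) \<and>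
     (\<forall>m n. 0 < m \<and> 0 < n \<longrightarrow> \<zeta> (m * n) ^ m = \<zeta> n)"

section \<open>Lie algebras (the whole type 'g, scalar multiplication sc, bracket br)\<close>

definition lie_algebra :: "('k::field \<Rightarrow> 'g::ab_group_add \<Rightarrow> 'g) \<Rightarrow> ('g \<Rightarrow> 'g \<Rightarrow> 'g) \<Rightarrow> bool" where
  "lie_algebra sc br \<longleftrightarrow> vector_space sc \<and>
     (\<forall>x. Vector_Spaces.linear sc sc (br x)) \<and> (\<forall>y. Vector_Spaces.linear sc sc (\<lambda>x. br x y)) \<and>
     (\<forall>x. br x x = 0) \<and>
     (\<forall>x y z. br x (br y z) + br y (br z x) + br z (br x y) = 0)"

definition fin_dim :: "('k::field \<Rightarrow> 'g::ab_group_add \<Rightarrow> 'g) \<Rightarrow> bool" where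
  "fin_dim sc \<longleftrightarrow> (\<exists>B. finite B \<and> module.span sc B = UNIV)"

definition lie_ideal :: "('k::field \<Rightarrow> 'g::ab_group_add \<Rightarrow> 'g) \<Rightarrow> ('g \<Rightarrow> 'g \<Rightarrow> 'g) \<Rightarrow> 'g set \<Rightarrow> bool" where
  "lie_ideal sc br I \<longleftrightarrow> module.subspace sc I \<and> (\<forall>x y. y \<in> I \<longrightarrow> br x y \<in> I)"

definition simple_lie :: "('k::field \<Rightarrow> 'g::ab_group_add \<Rightarrow> 'g) \<Rightarrow> ('g \<Rightarrow> 'g \<Rightarrow> 'g) \<Rightarrow> bool" where
  "simple_lie sc br \<longleftrightarrow> lie_algebra sc br \<and> fin_dim sc \<and> (\<exists>x y. br x y \<noteq> 0) \<and>
     (\<forall>I. lie_ideal sc br I \<longrightarrow> I = {0} \<or> I = UNIV)"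

definition lie_aut :: "('k::field \<Rightarrow> 'g::ab_group_add \<Rightarrow> 'g) \<Rightarrow> ('g \<Rightarrow> 'g \<Rightarrow> 'g) \<Rightarrow> ('g \<Rightarrow> 'g) \<Rightarrow> bool" where
  "lie_aut sc br f \<longleftrightarrow> bij f \<and> Vector_Spaces.linear sc sc f \<and> (\<forall>x y. f (br x y) = br (f x) (f y))"

section \<open>Automorphism tuples indexed by the finite type 'n (so n = CARD('n))\<close>

definition zpow_fun :: "('a \<Rightarrow> 'a) \<Rightarrow> int \<Rightarrow> 'a \<Rightarrow> 'a" where
  "zpow_fun f p = (if 0 \<le> p then f ^^ nat p else inv f ^^ nat (- p))"

definition sigmaP :: "('n::finite \<Rightarrow> 'g \<Rightarrow> 'g) \<Rightarrow> int^'n^'n \<Rightarrow> 'n \<Rightarrow> 'g \<Rightarrow> 'g" where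
  "sigmaP \<sigma> P j = Finite_Set.fold (\<lambda>i h. zpow_fun (\<sigma> i) (P $ i $ j) \<circ> h) id (UNIV :: 'n set)"

definition fixpts :: "('n \<Rightarrow> 'g \<Rightarrow> 'g) \<Rightarrow> 'g set" where
  "fixpts \<sigma> = {x. \<forall>i. \<sigma> i x = x}"

definition gbar :: "('k::field \<Rightarrow> 'g \<Rightarrow> 'g) \<Rightarrow> ('n::finite \<Rightarrow> 'g \<Rightarrow> 'g) \<Rightarrow> ('n \<Rightarrow> nat) \<Rightarrow> (nat \<Rightarrow> 'k)
    \<Rightarrow> int^'n \<Rightarrow> 'g set" where
  "gbar sc \<sigma> m \<zeta> lam = {x. \<forall>i. \<sigma> i x = sc (\<zeta> (m i) powi (lam $ i)) x}"

definition joint_eigvecs :: "('k::field \<Rightarrow> 'g::ab_group_add \<Rightarrow> 'g) \<Rightarrow> ('g \<Rightarrow> 'g \<Rightarrow> 'g) \<Rightarrow> 'g set \<Rightarrow> 'g set" where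
  "joint_eigvecs sc br H = {x. \<forall>h\<in>H. \<exists>c. br h x = sc c x}"

definition ad_diag_subalg :: "('k::field \<Rightarrow> 'g::ab_group_add \<Rightarrow> 'g) \<Rightarrow> ('g \<Rightarrow> 'g \<Rightarrow> 'g) \<Rightarrow> 'g set \<Rightarrow> 'g set \<Rightarrow> bool" where
  "ad_diag_subalg sc br S H \<longleftrightarrow> module.subspace sc H \<and> H \<subseteq> S \<and> (\<forall>x\<in>H. \<forall>y\<in>H. br x y \<in> H) \<and>
     module.span sc (joint_eigvecs sc br H) = UNIV"

definition cartan_subalg :: "('k::field \<Rightarrow> 'g::ab_group_add \<Rightarrow> 'g) \<Rightarrow> ('g \<Rightarrow> 'g \<Rightarrow> 'g) \<Rightarrow> 'g set \<Rightarrow> 'g set \<Rightarrow> bool" where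
  "cartan_subalg sc br S H \<longleftrightarrow> ad_diag_subalg sc br S H \<and>
     (\<forall>H'. ad_diag_subalg sc br S H' \<and> H \<subseteq> H' \<longrightarrow> H' = H)"

text \<open>Functionals on H are represented as functions 'g => 'k vanishing off H.\<close>
definition wspace :: "('k::field \<Rightarrow> 'g::ab_group_add \<Rightarrow> 'g) \<Rightarrow> ('g \<Rightarrow> 'g \<Rightarrow> 'g) \<Rightarrow> 'g set \<Rightarrow> ('g \<Rightarrow> 'k) \<Rightarrow> 'g set" where
  "wspace sc br H \<alpha> = {x. \<forall>h\<in>H. br h x = sc (\<alpha> h) x}"

definition is_weight :: "('k::field \<Rightarrow> 'g::ab_group_add \<Rightarrow> 'g) \<Rightarrow> ('g \<Rightarrow> 'g \<Rightarrow> 'g) \<Rightarrow> 'g set \<Rightarrow> ('g \<Rightarrow> 'k) \<Rightarrow> bool" where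
  "is_weight sc br H \<alpha> \<longleftrightarrow>
     (\<forall>h\<in>H. \<forall>h'\<in>H. \<alpha> (h + h') = \<alpha> h + \<alpha> h') \<and> (\<forall>c. \<forall>h\<in>H. \<alpha> (sc c h) = c * \<alpha> h) \<and>
     (\<forall>x. x \<notin> H \<longrightarrow> \<alpha> x = 0) \<and> wspace sc br H \<alpha> \<noteq> {0}"

inductive_set Qroot :: "('k::field \<Rightarrow> 'g::ab_group_add \<Rightarrow> 'g) \<Rightarrow> ('g \<Rightarrow> 'g \<Rightarrow> 'g) \<Rightarrow> 'g set \<Rightarrow> ('g \<Rightarrow> 'k) set"
  for sc br H where
  Q_zero: "(\<lambda>_. 0) \<in> Qroot sc br H"
| Q_gen: "is_weight sc br H \<alpha> \<Longrightarrow> \<alpha> \<noteq> (\<lambda>_. 0) \<Longrightarrow> \<alpha> \<in> Qroot sc br H"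
| Q_add: "\<alpha> \<in> Qroot sc br H \<Longrightarrow> \<beta> \<in> Qroot sc br H \<Longrightarrow> (\<lambda>x. \<alpha> x + \<beta> x) \<in> Qroot sc br H"
| Q_neg: "\<alpha> \<in> Qroot sc br H \<Longrightarrow> (\<lambda>x. - \<alpha> x) \<in> Qroot sc br H"

section \<open>g \<otimes> k[t_1^{+-1},...,t_n^{+-1}] as finitely supported maps Z^n => g\<close>

definition lsc :: "('k \<Rightarrow> 'g \<Rightarrow> 'g) \<Rightarrow> 'k \<Rightarrow> ('a \<Rightarrow> 'g) \<Rightarrow> 'a \<Rightarrow> 'g" where
  "lsc sc c f = (\<lambda>\<mu>. sc c (f \<mu>))"

definition ladd :: "('a \<Rightarrow> 'g::ab_group_add) \<Rightarrow> ('a \<Rightarrow> 'g) \<Rightarrow> 'a \<Rightarrow> 'g" where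
  "ladd f g = (\<lambda>\<mu>. f \<mu> + g \<mu>)"

text \<open>[x t^lam, y t^mu] = [x,y] t^(lam+mu), extended bilinearly.\<close>
definition lbr :: "('g::ab_group_add \<Rightarrow> 'g \<Rightarrow> 'g) \<Rightarrow> ('a::ab_group_add \<Rightarrow> 'g) \<Rightarrow> ('a \<Rightarrow> 'g) \<Rightarrow> 'a \<Rightarrow> 'g" where
  "lbr br f g = (\<lambda>\<nu>. \<Sum>lam\<in>{lam. f lam \<noteq> 0}. br (f lam) (g (\<nu> - lam)))"

definition mlcomp :: "('k::field \<Rightarrow> 'g::ab_group_add \<Rightarrow> 'g) \<Rightarrow> ('g \<Rightarrow> 'g \<Rightarrow> 'g) \<Rightarrow> ('n::finite \<Rightarrow> 'g \<Rightarrow> 'g)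
    \<Rightarrow> ('n \<Rightarrow> nat) \<Rightarrow> (nat \<Rightarrow> 'k) \<Rightarrow> 'g set \<Rightarrow> ('g \<Rightarrow> 'k) \<Rightarrow> int^'n \<Rightarrow> (int^'n \<Rightarrow> 'g) set" where
  "mlcomp sc br \<sigma> m \<zeta> H \<alpha> lam =
     {f. (\<forall>\<mu>. \<mu> \<noteq> lam \<longrightarrow> f \<mu> = 0) \<and> f lam \<in> wspace sc br H \<alpha> \<inter> gbar sc \<sigma> m \<zeta> lam}"

definition multiloop :: "('k::field \<Rightarrow> 'g::ab_group_add \<Rightarrow> 'g) \<Rightarrow> ('g \<Rightarrow> 'g \<Rightarrow> 'g) \<Rightarrow> ('n::finite \<Rightarrow> 'g \<Rightarrow> 'g)
    \<Rightarrow> ('n \<Rightarrow> nat) \<Rightarrow> (nat \<Rightarrow> 'k) \<Rightarrow> 'g set \<Rightarrow> (int^'n \<Rightarrow> 'g) set" where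
  "multiloop sc br \<sigma> m \<zeta> H =
     {f. finite {\<mu>. f \<mu> \<noteq> 0} \<and>
         (\<forall>\<mu>. f \<mu> \<in> module.span sc (\<Union>\<alpha>\<in>Qroot sc br H. wspace sc br H \<alpha> \<inter> gbar sc \<sigma> m \<zeta> \<mu>))}"

definition supp_Zn :: "(int^'n \<Rightarrow> 'g::zero) set \<Rightarrow> (int^'n) set" where
  "supp_Zn L = {lam. \<exists>f\<in>L. f lam \<noteq> 0}"

inductive_set zgen :: "'a::ab_group_add set \<Rightarrow> 'a set" for S where
  zg_zero: "0 \<in> zgen S"
| zg_gen: "x \<in> S \<Longrightarrow> x \<in> zgen S"
| zg_add: "x \<in> zgen S \<Longrightarrow> y \<in> zgen S \<Longrightarrow> x + y \<in> zgen S"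
| zg_neg: "x \<in> zgen S \<Longrightarrow> - x \<in> zgen S"

definition group_mono_on :: "'a::ab_group_add set \<Rightarrow> ('a \<Rightarrow> 'b::ab_group_add) \<Rightarrow> bool" where
  "group_mono_on G \<rho> \<longleftrightarrow> (\<forall>a\<in>G. \<forall>b\<in>G. \<rho> (a + b) = \<rho> a + \<rho> b) \<and> inj_on \<rho> G"

definition regraded_comp :: "(int^'n \<Rightarrow> (int^'n \<Rightarrow> 'g::zero) set) \<Rightarrow> (int^'n) set \<Rightarrow> (int^'n \<Rightarrow> int^'n)
    \<Rightarrow> int^'n \<Rightarrow> (int^'n \<Rightarrow> 'g) set" where
  "regraded_comp C G \<rho> lam = (if lam \<in> \<rho> ` G then C (the_inv_into G \<rho> lam) else {\<lambda>_. 0})"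

definition lie_iso_between :: "('k \<Rightarrow> 'g::ab_group_add \<Rightarrow> 'g) \<Rightarrow> ('g \<Rightarrow> 'g \<Rightarrow> 'g)
    \<Rightarrow> ('a::ab_group_add \<Rightarrow> 'g) set \<Rightarrow> ('a \<Rightarrow> 'g) set \<Rightarrow> (('a \<Rightarrow> 'g) \<Rightarrow> ('a \<Rightarrow> 'g)) \<Rightarrow> bool" where
  "lie_iso_between sc br L1 L2 \<phi> \<longleftrightarrow> bij_betw \<phi> L1 L2 \<and>
     (\<forall>f\<in>L1. \<forall>g\<in>L1. \<phi> (ladd f g) = ladd (\<phi> f) (\<phi> g)) \<and>
     (\<forall>c. \<forall>f\<in>L1. \<phi> (lsc sc c f) = lsc sc c (\<phi> f)) \<and>
     (\<forall>f\<in>L1. \<forall>g\<in>L1. \<phi> (lbr br f g) = lbr br (\<phi> f) (\<phi> g))"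

end

theory Submission
  imports Defs
begin
lemma bij_inv_comp:
  assumes "bij f" shows "f \<circ> inv f = id" "inv f \<circ> f = id"
  using assms by (auto simp: fun_eq_iff bij_def surj_f_inv_f inv_f_f)

lemma zpow_fun_0[simp]: "zpow_fun f 0 = id"
  by (simp add: zpow_fun_def)

lemma zpow_fun_1: "zpow_fun f 1 = f"
  by (simp add: zpow_fun_def)

lemma zpow_fun_succ:
  assumes "bij f" shows "zpow_fun f (a + 1) = f \<circ> zpow_fun f a"
proof (cases "a \<ge> 0")
  case True
  then have "nat (a+1) = Suc (nat a)" by simp
  then show ?thesis using True by (simp add: zpow_fun_def funpow_Suc_right[symmetric] del: funpow.simps)
      (simp add: funpow.simps)
next
  case False
  show ?thesis
  proof (cases "a = -1")
    case True then show ?thesis using bij_inv_comp[OF assms] by (simp add: zpow_fun_def)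
  next
    case F2: False
    with False have "nat (-a) = Suc (nat (-(a+1)))" by simp
    then have "zpow_fun f a = inv f \<circ> zpow_fun f (a+1)" using False F2
      by (simp add: zpow_fun_def)
    then show ?thesis using bij_inv_comp[OF assms] by (simp add: o_assoc)
  qed
qed

lemma zpow_fun_pred:
  assumes "bij f" shows "zpow_fun f (a - 1) = inv f \<circ> zpow_fun f a"
proof -
  have "zpow_fun f a = f \<circ> zpow_fun f (a - 1)" using zpow_fun_succ[OF assms, of "a-1"] by simp
  then have "inv f \<circ> zpow_fun f a = (inv f \<circ> f) \<circ> zpow_fun f (a - 1)" by (simp add: o_assoc)
  then show ?thesis using bij_inv_comp[OF assms] by simp
qed

lemma zpow_fun_add:
  assumes "bij f" shows "zpow_fun f (a + b) = zpow_fun f a \<circ> zpow_fun f b"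
proof (induction a rule: int_induct[where k=0])
  case base then show ?case by simp
next
  case (step1 i)
  have "zpow_fun f (i + 1 + b) = zpow_fun f ((i + b) + 1)" by (rule arg_cong[where f="zpow_fun f"]) simp
  also have "\<dots> = f \<circ> zpow_fun f (i + b)" by (rule zpow_fun_succ[OF assms])
  finally show ?case using step1 zpow_fun_succ[OF assms, of i] by (simp add: o_assoc)
next
  case (step2 i)
  have "zpow_fun f (i - 1 + b) = zpow_fun f ((i + b) - 1)" by (rule arg_cong[where f="zpow_fun f"]) simp
  also have "\<dots> = inv f \<circ> zpow_fun f (i + b)" by (rule zpow_fun_pred[OF assms])
  finally show ?case using step2 zpow_fun_pred[OF assms, of i] by (simp add: o_assoc)
qed

lemma zpow_fun_bij:
  assumes "bij f" shows "bij (zpow_fun f a)"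
proof -
  have "zpow_fun f a \<circ> zpow_fun f (-a) = id" "zpow_fun f (-a) \<circ> zpow_fun f a = id"
    using zpow_fun_add[OF assms, of a "-a"] zpow_fun_add[OF assms, of "-a" a] by simp_all
  then show ?thesis using o_bij by blast
qed

lemma inv_commute:
  assumes "bij f" "f \<circ> h = h \<circ> f" shows "inv f \<circ> h = h \<circ> inv f"
proof (rule ext)
  fix x
  have "f (inv f (h x)) = h x" "inv f (f y) = y" for y using assms(1)
    by (auto simp: bij_def surj_f_inv_f inv_f_f)
  moreover have "f (h (inv f x)) = h x" using assms
    by (metis bij_def comp_apply surj_f_inv_f)
  ultimately show "(inv f \<circ> h) x = (h \<circ> inv f) x"
    by (metis comp_apply)
qed

lemma zpow_fun_commute1:
  assumes "bij f" "f \<circ> h = h \<circ> f" shows "zpow_fun f a \<circ> h = h \<circ> zpow_fun f a"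
proof (induction a rule: int_induct[where k=0])
  case base then show ?case by simp
next
  case (step1 i)
  have "zpow_fun f (i+1) \<circ> h = f \<circ> (zpow_fun f i \<circ> h)" using zpow_fun_succ[OF assms(1), of i]
    by (simp add: comp_assoc)
  also have "\<dots> = (f \<circ> h) \<circ> zpow_fun f i" using step1 by (simp add: fun_eq_iff)
  also have "\<dots> = h \<circ> zpow_fun f (i+1)" using zpow_fun_succ[OF assms(1), of i] assms(2)
    by (simp add: comp_assoc)
  finally show ?case .
next
  case (step2 i)
  have "zpow_fun f (i-1) \<circ> h = inv f \<circ> (zpow_fun f i \<circ> h)" using zpow_fun_pred[OF assms(1), of i]
    by (simp add: comp_assoc)
  also have "\<dots> = (inv f \<circ> h) \<circ> zpow_fun f i" using step2 by (simp add: fun_eq_iff)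
  also have "\<dots> = h \<circ> zpow_fun f (i-1)" using zpow_fun_pred[OF assms(1), of i] inv_commute[OF assms]
    by (simp add: comp_assoc)
  finally show ?case .
qed

lemma zpow_fun_commute:
  assumes "bij f" "bij h" "f \<circ> h = h \<circ> f"
  shows "zpow_fun f a \<circ> zpow_fun h b = zpow_fun h b \<circ> zpow_fun f a"
proof -
  have "zpow_fun f a \<circ> h = h \<circ> zpow_fun f a" by (rule zpow_fun_commute1[OF assms(1,3)])
  then show ?thesis using zpow_fun_commute1[OF assms(2), of "zpow_fun f a" b] by simp
qed

definition FF :: "('i \<Rightarrow> 'g \<Rightarrow> 'g) \<Rightarrow> 'i set \<Rightarrow> 'g \<Rightarrow> 'g" where
  "FF A F = Finite_Set.fold (\<lambda>i h. A i \<circ> h) id F"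

lemma FF_empty[simp]: "FF A {} = id" by (simp add: FF_def)

lemma FF_insert:
  assumes "\<And>i j. i \<in> S \<Longrightarrow> j \<in> S \<Longrightarrow> A i \<circ> A j = A j \<circ> A i"
    and "insert i F \<subseteq> S" "finite F" "i \<notin> F"
  shows "FF A (insert i F) = A i \<circ> FF A F"
proof -
  interpret comp_fun_commute_on S "\<lambda>i h. A i \<circ> h"
  proof
    fix x y assume "x \<in> S" "y \<in> S"
    then show "(\<lambda>h. A y \<circ> h) \<circ> (\<lambda>h. A x \<circ> h) = (\<lambda>h. A x \<circ> h) \<circ> (\<lambda>h. A y \<circ> h)"
      using assms(1)[of x y] by (simp add: fun_eq_iff o_assoc[symmetric])
  qed
  show ?thesis unfolding FF_def by (rule fold_insert[OF assms(2-4)])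
qed

lemma FF_id:
  assumes "finite F" "\<And>i. i \<in> F \<Longrightarrow> A i = id" shows "FF A F = id"
  using assms
proof (induction F rule: finite_induct)
  case empty then show ?case by simp
next
  case (insert x F)
  have "FF A (insert x F) = A x \<circ> FF A F"
    by (rule FF_insert[where S="insert x F"]) (use insert in auto)
  then show ?case using insert by simp
qed

lemma FF_commute:
  assumes "\<And>i j. A i \<circ> A j = A j \<circ> A i" "\<And>i. C \<circ> A i = A i \<circ> C" "finite F"
  shows "C \<circ> FF A F = FF A F \<circ> C"
  using assms(3)
proof (induction F rule: finite_induct)
  case empty then show ?case by simp
next
  case (insert x F)
  have e: "FF A (insert x F) = A x \<circ> FF A F"
    by (rule FF_insert[where S=UNIV]) (use insert assms in auto)
  have "C \<circ> (A x \<circ> FF A F) = A x \<circ> (C \<circ> FF A F)" using assms(2)[of x] by (simp add: o_assoc)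
  also have "\<dots> = (A x \<circ> FF A F) \<circ> C" using insert.IH by (simp add: fun_eq_iff)
  finally show ?case unfolding e .
qed

lemma FF_comp:
  assumes "\<And>i j. A i \<circ> A j = A j \<circ> A i" "\<And>i j. B i \<circ> B j = B j \<circ> B i"
    "\<And>i j. A i \<circ> B j = B j \<circ> A i" "finite F"
  shows "FF (\<lambda>i. A i \<circ> B i) F = FF A F \<circ> FF B F"
  using assms(4)
proof (induction F rule: finite_induct)
  case empty then show ?case by simp
next
  case (insert x F)
  have cAB: "(A i \<circ> B i) \<circ> (A j \<circ> B j) = (A j \<circ> B j) \<circ> (A i \<circ> B i)" for i j
  proof -
    have "(A i \<circ> B i) \<circ> (A j \<circ> B j) = A i \<circ> (B i \<circ> A j) \<circ> B j" by (simp add: o_assoc)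
    also have "\<dots> = A i \<circ> A j \<circ> (B i \<circ> B j)" using assms(3)[of j i] by (simp add: fun_eq_iff)
    also have "\<dots> = A j \<circ> A i \<circ> (B j \<circ> B i)" using assms(1,2) by simp
    also have "\<dots> = A j \<circ> (A i \<circ> B j) \<circ> B i" by (simp add: o_assoc)
    also have "\<dots> = (A j \<circ> B j) \<circ> (A i \<circ> B i)" using assms(3)[of i j] by (simp add: fun_eq_iff)
    finally show ?thesis .
  qed
  have e1: "FF (\<lambda>i. A i \<circ> B i) (insert x F) = (A x \<circ> B x) \<circ> FF (\<lambda>i. A i \<circ> B i) F"
    by (rule FF_insert[where S=UNIV]) (use insert cAB in auto)
  have e2: "FF A (insert x F) = A x \<circ> FF A F"
    by (rule FF_insert[where S=UNIV]) (use insert assms in auto)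
  have e3: "FF B (insert x F) = B x \<circ> FF B F"
    by (rule FF_insert[where S=UNIV]) (use insert assms in auto)
  have c: "B x \<circ> FF A F = FF A F \<circ> B x"
    using FF_commute[of A "B x" F] assms insert by metis
  have "(A x \<circ> B x) \<circ> (FF A F \<circ> FF B F) = A x \<circ> (B x \<circ> FF A F) \<circ> FF B F" by (simp add: o_assoc)
  also have "\<dots> = (A x \<circ> FF A F) \<circ> (B x \<circ> FF B F)" using c by (simp add: o_assoc)
  finally show ?case unfolding e1 e2 e3 insert.IH .
qed

definition good :: "('n \<Rightarrow> 'g \<Rightarrow> 'g) \<Rightarrow> bool" where
  "good \<tau> \<longleftrightarrow> (\<forall>i. bij (\<tau> i)) \<and> (\<forall>i j. \<tau> i \<circ> \<tau> j = \<tau> j \<circ> \<tau> i)"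

definition Ep :: "('n::finite \<Rightarrow> 'g \<Rightarrow> 'g) \<Rightarrow> int^'n \<Rightarrow> 'g \<Rightarrow> 'g" where
  "Ep \<tau> v = FF (\<lambda>i. zpow_fun (\<tau> i) (v$i)) UNIV"

lemma sigmaP_Ep: "sigmaP \<sigma> P j = Ep \<sigma> (\<chi> i. P$i$j)"
  by (simp add: sigmaP_def Ep_def FF_def)

lemma good_zpow:
  assumes "good \<tau>" shows "zpow_fun (\<tau> i) a \<circ> zpow_fun (\<tau> j) b = zpow_fun (\<tau> j) b \<circ> zpow_fun (\<tau> i) a"
  using assms zpow_fun_commute unfolding good_def by blast

lemma Ep_add:
  assumes "good \<tau>" shows "Ep \<tau> (u + v) = Ep \<tau> u \<circ> Ep \<tau> v"
proof -
  have "(\<lambda>i. zpow_fun (\<tau> i) ((u+v)$i)) = (\<lambda>i. zpow_fun (\<tau> i) (u$i) \<circ> zpow_fun (\<tau> i) (v$i))"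
    using assms unfolding good_def by (simp add: zpow_fun_add fun_eq_iff)
  then show ?thesis unfolding Ep_def
    using FF_comp[of "\<lambda>i. zpow_fun (\<tau> i) (u$i)" "\<lambda>i. zpow_fun (\<tau> i) (v$i)" UNIV] good_zpow[OF assms]
    by simp
qed

lemma Ep_zero: "Ep \<tau> 0 = id"
  unfolding Ep_def by (rule FF_id) auto

lemma Ep_commute: assumes "good \<tau>" shows "Ep \<tau> u \<circ> Ep \<tau> v = Ep \<tau> v \<circ> Ep \<tau> u"
  using Ep_add[OF assms, of u v] Ep_add[OF assms, of v u] by (simp add: add.commute)

lemma Ep_inv: assumes "good \<tau>" shows "Ep \<tau> (-v) \<circ> Ep \<tau> v = id" "Ep \<tau> v \<circ> Ep \<tau> (-v) = id"
  using Ep_add[OF assms, of v "-v"] Ep_add[OF assms, of "-v" v] by (simp_all add: Ep_zero)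

lemma Ep_bij: assumes "good \<tau>" shows "bij (Ep \<tau> v)"
  using Ep_inv[OF assms] o_bij by blast

lemma good_Ep: assumes "good \<tau>" shows "good (\<lambda>j. Ep \<tau> (c j))"
  using Ep_bij[OF assms] Ep_commute[OF assms] unfolding good_def by blast

definition unitv :: "'n \<Rightarrow> int^'n" where "unitv i = (\<chi> j. if j = i then 1 else 0)"

lemma Ep_unit: fixes \<tau> :: "'n::finite \<Rightarrow> 'g \<Rightarrow> 'g" assumes "good \<tau>" shows "Ep \<tau> (unitv i) = \<tau> i"
proof -
  have U: "insert i (UNIV - {i}) = (UNIV::'n set)" by auto
  have "Ep \<tau> (unitv i) = FF (\<lambda>j. zpow_fun (\<tau> j) (unitv i $ j)) (insert i (UNIV - {i}))"
    unfolding Ep_def by (simp only: U)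
  also have "\<dots> = zpow_fun (\<tau> i) (unitv i $ i) \<circ> FF (\<lambda>j. zpow_fun (\<tau> j) (unitv i $ j)) (UNIV - {i})"
    by (rule FF_insert[where S=UNIV]) (use good_zpow[OF assms] in auto)
  also have "FF (\<lambda>j. zpow_fun (\<tau> j) (unitv i $ j)) (UNIV - {i}) = id"
    by (rule FF_id) (auto simp: unitv_def)
  finally show ?thesis by (simp add: zpow_fun_1 unitv_def)
qed

lemma Ep_zpow: assumes "good \<tau>" shows "zpow_fun (Ep \<tau> v) k = Ep \<tau> (k *s v)"
proof (induction k rule: int_induct[where k=0])
  case base then show ?case by (simp add: Ep_zero)
next
  case (step1 i)
  have "zpow_fun (Ep \<tau> v) (i+1) = Ep \<tau> v \<circ> Ep \<tau> (i *s v)"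
    using zpow_fun_succ[OF Ep_bij[OF assms]] step1 by simp
  also have "\<dots> = Ep \<tau> ((i+1) *s v)" using Ep_add[OF assms, of v "i *s v"]
    by (simp add: algebra_simps vector_sadd_rdistrib)
  finally show ?case .
next
  case (step2 i)
  have iv: "inv (Ep \<tau> v) = Ep \<tau> (-v)"
    using Ep_inv[OF assms, of v] inv_unique_comp by metis
  have "zpow_fun (Ep \<tau> v) (i-1) = Ep \<tau> (-v) \<circ> Ep \<tau> (i *s v)"
    using zpow_fun_pred[OF Ep_bij[OF assms]] step2 iv by simp
  also have "\<dots> = Ep \<tau> ((i-1) *s v)" using Ep_add[OF assms, of "-v" "i *s v"]
    by (simp add: vec_eq_iff algebra_simps)
  finally show ?case .
qed

lemma FF_Ep:
  assumes "good \<tau>" "finite F" shows "FF (\<lambda>j. Ep \<tau> (g j)) F = Ep \<tau> (sum g F)"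
  using assms(2)
proof (induction F rule: finite_induct)
  case empty then show ?case by (simp add: Ep_zero)
next
  case (insert x F)
  have "FF (\<lambda>j. Ep \<tau> (g j)) (insert x F) = Ep \<tau> (g x) \<circ> FF (\<lambda>j. Ep \<tau> (g j)) F"
    by (rule FF_insert[where S=UNIV]) (use insert Ep_commute[OF assms(1)] in auto)
  then show ?case using insert Ep_add[OF assms(1)] by simp
qed

lemma Ep_Ep:
  assumes "good \<tau>" shows "Ep (\<lambda>j. Ep \<tau> (c j)) w = Ep \<tau> (sum (\<lambda>j. w$j *s c j) UNIV)"
  unfolding Ep_def[of "\<lambda>j. Ep \<tau> (c j)"] Ep_zpow[OF assms]
  using FF_Ep[OF assms, of UNIV "\<lambda>j. w$j *s c j"] by simp

definition scomm :: "('k \<Rightarrow> 'g \<Rightarrow> 'g) \<Rightarrow> ('g \<Rightarrow> 'g) \<Rightarrow> bool" where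
  "scomm sc f \<longleftrightarrow> (\<forall>c y. f (sc c y) = sc c (f y))"

lemma scomm_inv: assumes "bij f" "scomm sc f" shows "scomm sc (inv f)"
  unfolding scomm_def
proof (intro allI)
  fix c y
  have "inv f (sc c y) = inv f (sc c (f (inv f y)))" using assms(1)
    by (simp add: bij_def surj_f_inv_f)
  also have "\<dots> = inv f (f (sc c (inv f y)))" using assms(2) by (simp add: scomm_def)
  also have "\<dots> = sc c (inv f y)" using assms(1) by (simp add: bij_def inv_f_f)
  finally show "inv f (sc c y) = sc c (inv f y)" .
qed

lemma scomm_comp: "scomm sc f \<Longrightarrow> scomm sc g \<Longrightarrow> scomm sc (f \<circ> g)"
  by (simp add: scomm_def)

lemma scomm_id: "scomm sc id" by (simp add: scomm_def)

lemma scomm_funpow: "scomm sc f \<Longrightarrow> scomm sc (f ^^ n)"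
  by (induction n) (simp_all add: scomm_def)

lemma scomm_zpow: assumes "bij f" "scomm sc f" shows "scomm sc (zpow_fun f k)"
  using scomm_funpow[OF assms(2)] scomm_funpow[OF scomm_inv[OF assms]]
  by (simp add: zpow_fun_def)

locale VS = vector_space sc for sc :: "'k::field \<Rightarrow> 'g::ab_group_add \<Rightarrow> 'g"
begin

lemma zpow_eig:
  assumes "bij f" "scomm sc f" "f x = sc (z powi a) x" "z \<noteq> 0"
  shows "zpow_fun f k x = sc (z powi (a * k)) x"
proof (induction k rule: int_induct[where k=0])
  case base then show ?case by simp
next
  case (step1 i)
  have "zpow_fun f (i+1) x = f (sc (z powi (a * i)) x)"
    using zpow_fun_succ[OF assms(1), of i] step1 by simp
  also have "\<dots> = sc (z powi (a*i) * z powi a) x" using assms(2,3) by (simp add: scomm_def)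
  also have "z powi (a*i) * z powi a = z powi (a * (i+1))"
  proof -
    have "z powi (a*(i+1)) = z powi (a*i + a)" by (rule arg_cong[where f="power_int z"]) (simp add: algebra_simps)
    also have "\<dots> = z powi (a*i) * z powi a" by (rule power_int_add) (simp add: assms(4))
    finally show ?thesis by simp
  qed
  finally show ?case .
next
  case (step2 i)
  have ix: "inv f x = sc (z powi (-a)) x"
  proof -
    have "x = inv f (f x)" using assms(1) by (simp add: bij_def inv_f_f)
    also have "\<dots> = sc (z powi a) (inv f x)" using assms scomm_inv[OF assms(1,2)] by (simp add: scomm_def)
    finally have e: "x = sc (z powi a) (inv f x)" .
    have "sc (z powi (-a)) x = sc (z powi (-a) * z powi a) (inv f x)"
      using arg_cong[OF e, of "sc (z powi (-a))"] by simp
    also have "z powi (-a) * z powi a = 1" using assms(4) by (simp add: power_int_minus)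
    finally show ?thesis by simp
  qed
  have "zpow_fun f (i-1) x = inv f (sc (z powi (a * i)) x)"
    using zpow_fun_pred[OF assms(1), of i] step2 by simp
  also have "\<dots> = sc (z powi (a*i) * z powi (-a)) x" using scomm_inv[OF assms(1,2)] ix
    by (simp add: scomm_def)
  also have "z powi (a*i) * z powi (-a) = z powi (a * (i-1))"
  proof -
    have "z powi (a*(i-1)) = z powi (a*i + -a)" by (rule arg_cong[where f="power_int z"]) (simp add: algebra_simps)
    also have "\<dots> = z powi (a*i) * z powi (-a)" by (rule power_int_add) (simp add: assms(4))
    finally show ?thesis by simp
  qed
  finally show ?case .
qed

lemma FF_eig:
  assumes "\<And>i j. A i \<circ> A j = A j \<circ> A i" "\<And>i. scomm sc (A i)"
    "\<And>i. A i x = sc (z powi e i) x" "z \<noteq> 0" "finite F"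
  shows "FF A F x = sc (z powi (sum e F)) x"
  using assms(5)
proof (induction F rule: finite_induct)
  case empty then show ?case by simp
next
  case (insert y F)
  have "FF A (insert y F) = A y \<circ> FF A F"
    by (rule FF_insert[where S=UNIV]) (use insert assms in auto)
  then have "FF A (insert y F) x = sc (z powi (sum e F) * z powi (e y)) x"
    using insert.IH assms(2,3) by (simp add: scomm_def)
  moreover have "sum e (insert y F) = e y + sum e F" using insert by simp
  moreover have "z powi (e y + sum e F) = z powi (e y) * z powi (sum e F)"
    by (rule power_int_add) (simp add: assms(4))
  ultimately show ?case by (simp add: mult.commute)
qed

lemma Ep_eig:
  assumes "good \<tau>" "\<And>i. scomm sc (\<tau> i)" "\<And>i. \<tau> i x = sc (z powi a i) x" "z \<noteq> 0"
  shows "Ep \<tau> v x = sc (z powi (\<Sum>i\<in>UNIV. a i * v$i)) x"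
proof -
  have b: "bij (\<tau> i)" for i using assms(1) by (simp add: good_def)
  show ?thesis unfolding Ep_def
  proof (rule FF_eig)
    show "zpow_fun (\<tau> i) (v$i) \<circ> zpow_fun (\<tau> j) (v$j) = zpow_fun (\<tau> j) (v$j) \<circ> zpow_fun (\<tau> i) (v$i)" for i j
      by (rule good_zpow[OF assms(1)])
    show "scomm sc (zpow_fun (\<tau> i) (v$i))" for i
      by (rule scomm_zpow[OF b assms(2)])
    show "zpow_fun (\<tau> i) (v$i) x = sc (z powi (a i * v$i)) x" for i
      by (rule zpow_eig[OF b assms(2) assms(3) assms(4)])
    show "z \<noteq> 0" by (rule assms(4))
    show "finite (UNIV::'a set)" by simp
  qed
qed

lemma Ep_scomm:
  assumes "good \<tau>" "\<And>i. scomm sc (\<tau> i)" shows "scomm sc (Ep \<tau> v)"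
proof -
  have b: "bij (\<tau> i)" for i using assms(1) by (simp add: good_def)
  have "scomm sc (FF (\<lambda>i. zpow_fun (\<tau> i) (v$i)) F)" if "finite F" for F
    using that
  proof (induction F rule: finite_induct)
    case empty then show ?case by (simp add: scomm_def)
  next
    case (insert y F)
    have e: "FF (\<lambda>i. zpow_fun (\<tau> i) (v$i)) (insert y F) = zpow_fun (\<tau> y) (v$y) \<circ> FF (\<lambda>i. zpow_fun (\<tau> i) (v$i)) F"
      by (rule FF_insert[where S=UNIV]) (use insert good_zpow[OF assms(1)] in auto)
    show ?case unfolding e by (rule scomm_comp[OF scomm_zpow[OF b assms(2)] insert.IH])
  qed
  then show ?thesis unfolding Ep_def by simp
qed

end

lemma root_sub:
  assumes "compatible_roots_of_unity \<zeta>" "n > 0" "n dvd K" "K > 0"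
  shows "\<zeta> n = \<zeta> K ^ (K div n)"
proof -
  have "K div n > 0" using assms by (metis dvd_div_eq_0_iff gr0I less_not_refl)
  then have "\<zeta> ((K div n) * n) ^ (K div n) = \<zeta> n" using assms(1,2) unfolding compatible_roots_of_unity_def by blast
  moreover have "(K div n) * n = K" using assms(3) by simp
  ultimately show ?thesis by simp
qed

lemma root_nz:
  assumes "compatible_roots_of_unity \<zeta>" "K > 0" shows "(\<zeta> K :: 'k::field) \<noteq> 0"
proof
  assume "\<zeta> K = 0"
  moreover have "\<zeta> K ^ K = 1" using assms unfolding compatible_roots_of_unity_def by blast
  ultimately show False using assms(2) by (simp add: power_0_left)
qed

lemma root_powi_mod:
  assumes "compatible_roots_of_unity \<zeta>" "K > 0"
  shows "(\<zeta> K :: 'k::field) powi a = \<zeta> K ^ nat (a mod int K)"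
proof -
  have K1: "\<zeta> K ^ K = 1" using assms unfolding compatible_roots_of_unity_def by blast
  have nz: "\<zeta> K \<noteq> 0" by (rule root_nz[OF assms])
  have "a = int K * (a div int K) + a mod int K" by simp
  then have "\<zeta> K powi a = \<zeta> K powi (int K * (a div int K)) * \<zeta> K powi (a mod int K)"
    using nz by (metis power_int_add)
  also have "\<zeta> K powi (int K * (a div int K)) = 1"
    by (simp add: power_int_mult K1)
  also have "\<zeta> K powi (a mod int K) = \<zeta> K ^ nat (a mod int K)"
    using assms(2) by (simp add: power_int_nonneg_exp)
  finally show ?thesis by simp
qed

lemma root_powi_eq_1:
  assumes "compatible_roots_of_unity \<zeta>" "K > 0"
  shows "(\<zeta> K :: 'k::field) powi a = 1 \<longleftrightarrow> int K dvd a"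
proof
  assume h: "\<zeta> K powi a = 1"
  have r: "nat (a mod int K) < K" using assms(2) by (simp add: nat_less_iff)
  have "\<zeta> K ^ nat (a mod int K) = 1" using h root_powi_mod[OF assms] by simp
  then have "nat (a mod int K) = 0" using r assms unfolding compatible_roots_of_unity_def
    by (metis gr0I)
  moreover have "a mod int K \<ge> 0" using assms(2) by simp
  ultimately show "int K dvd a" using assms(2) by (simp add: dvd_eq_mod_eq_0)
next
  assume "int K dvd a"
  then obtain q where "a = int K * q" by (auto simp: dvd_def)
  moreover have "\<zeta> K ^ K = 1" using assms unfolding compatible_roots_of_unity_def by blast
  ultimately show "\<zeta> K powi a = 1" by (simp add: power_int_mult)
qed

lemma root_sub_powi:
  assumes "compatible_roots_of_unity \<zeta>" "n > 0" "n dvd K" "K > 0"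
  shows "(\<zeta> n :: 'k::field) powi l = \<zeta> K powi (int (K div n) * l)"
  using root_sub[OF assms] by (simp add: power_int_power)

definition eigz :: "('k::field \<Rightarrow> 'g \<Rightarrow> 'g) \<Rightarrow> 'k \<Rightarrow> ('n::finite \<Rightarrow> 'g \<Rightarrow> 'g) \<Rightarrow> int^'n \<Rightarrow> 'g \<Rightarrow> bool" where
  "eigz sc z \<tau> e x \<longleftrightarrow> (\<forall>i. \<tau> i x = sc (z powi (e$i)) x)"

lemma AR2:
  assumes "n dvd K" shows "int n * (int (K div n) * l) = int K * l"
proof -
  have e: "int n * int (K div n) = int K" using assms by (metis dvd_mult_div_cancel of_nat_mult)
  have "int n * (int (K div n) * l) = (int n * int (K div n)) * l" by (rule mult.assoc[symmetric])
  then show ?thesis using e by simp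
qed
lemma AR:
  assumes "n > 0" "n dvd K" "int K dvd int n * t" "K > 0"
  shows "int (K div n) * (int n * t div int K) = t"
proof -
  obtain q where q: "int n * t = int K * q" using assms(3) by (auto simp: dvd_def)
  have "int K > 0" using assms(4) by simp
  then have d: "int n * t div int K = q" using q by simp
  have "int n * (int (K div n) * q) = int n * t" using q AR2[OF assms(2)] by simp
  then show ?thesis using d assms(1) by simp
qed

lemma Qunit: "((A::int^'n::finite^'n) *v unitv i) $ j = A$j$i"
  by (simp add: matrix_vector_mult_def unitv_def if_distrib if_distribR cong: if_cong)

locale MLA = VS sc for sc :: "'k::field \<Rightarrow> 'g::ab_group_add \<Rightarrow> 'g" +
  fixes \<sigma> :: "'n::finite \<Rightarrow> 'g \<Rightarrow> 'g" and m mt :: "'n \<Rightarrow> nat" and \<zeta> :: "nat \<Rightarrow> 'k"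
    and P Q :: "int^'n^'n"
  assumes zeta: "compatible_roots_of_unity \<zeta>"
    and g\<sigma>: "good \<sigma>" and s\<sigma>: "\<And>i. scomm sc (\<sigma> i)"
    and mpos: "\<And>i. m i > 0" and mper: "\<And>i. \<sigma> i ^^ m i = id"
    and mtpos: "\<And>j. mt j > 0" and mtper: "\<And>j. sigmaP \<sigma> P j ^^ mt j = id"
    and PQ: "P ** Q = mat 1" and QP: "Q ** P = mat 1"
begin

definition K :: nat where "K = (\<Prod>i\<in>UNIV. m i) * (\<Prod>j\<in>UNIV. mt j)"

lemma K_pos: "K > 0"
  unfolding K_def using mpos mtpos by (simp add: prod_pos)

lemma m_dvd: "m i dvd K"
  unfolding K_def by (simp add: dvd_prodI dvd_mult2)

lemma mt_dvd: "mt j dvd K"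
  unfolding K_def by (simp add: dvd_prodI dvd_mult)

definition z :: 'k where "z = \<zeta> K"

lemma z_nz: "z \<noteq> 0" unfolding z_def by (rule root_nz[OF zeta K_pos])

abbreviation tP where "tP \<equiv> sigmaP \<sigma> P"

definition col :: "'n \<Rightarrow> int^'n" where "col j = (\<chi> i. P$i$j)"

lemma tP_Ep: "tP = (\<lambda>j. Ep \<sigma> (col j))"
  by (simp add: fun_eq_iff sigmaP_Ep col_def)

lemma good_tP: "good tP" unfolding tP_Ep by (rule good_Ep[OF g\<sigma>])

lemma scomm_tP: "scomm sc (tP j)" unfolding tP_Ep by (rule Ep_scomm[OF g\<sigma> s\<sigma>])

lemma EZ1: assumes "eigz sc z \<sigma> e x" shows "eigz sc z tP (e v* P) x"
  unfolding eigz_def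
proof
  fix j
  have "tP j x = sc (z powi (\<Sum>i\<in>UNIV. e$i * col j $ i)) x"
    unfolding tP_Ep by (rule Ep_eig[OF g\<sigma> s\<sigma>, where a="\<lambda>i. e$i", OF _ z_nz]) (use assms in \<open>simp add: eigz_def\<close>)
  then show "tP j x = sc (z powi ((e v* P) $ j)) x"
    by (simp add: col_def vector_matrix_mult_def)
qed

lemma sigma_tP: "\<sigma> i = Ep tP (Q *v unitv i)"
proof -
  have "Ep tP (Q *v unitv i) = Ep \<sigma> (\<Sum>j\<in>UNIV. (Q *v unitv i)$j *s col j)"
    unfolding tP_Ep by (rule Ep_Ep[OF g\<sigma>])
  also have "(\<Sum>j\<in>UNIV. (Q *v unitv i)$j *s col j) = P *v (Q *v unitv i)"
    by (simp add: vec_eq_iff col_def matrix_vector_mult_def[of P] mult.commute)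
  also have "\<dots> = unitv i" by (simp add: matrix_vector_mul_assoc PQ)
  finally show ?thesis using Ep_unit[OF g\<sigma>] by simp
qed

lemma EZ2: assumes "eigz sc z tP w x" shows "eigz sc z \<sigma> (w v* Q) x"
  unfolding eigz_def
proof
  fix i
  have "\<sigma> i x = Ep tP (Q *v unitv i) x" by (rule fun_cong[OF sigma_tP])
  also have "\<dots> = sc (z powi (\<Sum>j\<in>UNIV. w$j * (Q *v unitv i) $ j)) x"
    by (rule Ep_eig[OF good_tP scomm_tP, where a="\<lambda>j. w$j", OF _ z_nz]) (use assms in \<open>simp add: eigz_def\<close>)
  also have "(\<Sum>j\<in>UNIV. w$j * (Q *v unitv i) $ j) = (w v* Q) $ i"
    by (simp add: Qunit vector_matrix_mult_def)
  finally show "\<sigma> i x = sc (z powi ((w v* Q) $ i)) x" .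
qed

lemma period:
  assumes "eigz sc z \<tau> e x" "x \<noteq> 0" "\<tau> i ^^ n = id" "bij (\<tau> i)" "scomm sc (\<tau> i)"
  shows "int K dvd int n * e$i"
proof -
  have "zpow_fun (\<tau> i) (int n) x = sc (z powi (e$i * int n)) x"
    by (rule zpow_eig[OF assms(4,5), where a="e$i", OF _ z_nz]) (use assms(1) in \<open>simp add: eigz_def\<close>)
  moreover have "zpow_fun (\<tau> i) (int n) = id" using assms(3) by (simp add: zpow_fun_def)
  ultimately have "sc (z powi (e$i * int n)) x = sc 1 x" by simp
  then have "z powi (e$i * int n) = 1 \<or> x = 0" by (simp only: scale_cancel_right)
  then have "z powi (e$i * int n) = 1" using assms(2) by simp
  then have "int K dvd e$i * int n" unfolding z_def using root_powi_eq_1[OF zeta K_pos, of "e$i * int n"]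
    by (simp only:)
  then show ?thesis by (metis mult.commute)
qed

end

context MLA begin

definition av :: "int^'n \<Rightarrow> int^'n" where "av lam = (\<chi> i. int (K div m i) * lam$i)"
definition atv :: "int^'n \<Rightarrow> int^'n" where "atv lam = (\<chi> j. int (K div mt j) * lam$j)"
definition sv :: "int^'n \<Rightarrow> int^'n" where "sv lam = av lam v* P"
definition Gd :: "(int^'n) set" where "Gd = {lam. \<forall>j. int K dvd int (mt j) * (sv lam)$j}"
definition rho :: "int^'n \<Rightarrow> int^'n" where "rho lam = (\<chi> j. int (mt j) * (sv lam)$j div int K)"

lemma gbar_eig: "gbar sc \<sigma> m \<zeta> lam = {x. eigz sc z \<sigma> (av lam) x}"
  unfolding gbar_def eigz_def av_def z_def
  using root_sub_powi[OF zeta mpos m_dvd K_pos] by simp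

lemma gbarP_eig: "gbar sc tP mt \<zeta> lam = {x. eigz sc z tP (atv lam) x}"
  unfolding gbar_def eigz_def atv_def z_def
  using root_sub_powi[OF zeta mtpos mt_dvd K_pos] by simp

lemma at_rho: assumes "lam \<in> Gd" shows "atv (rho lam) = sv lam"
proof -
  have "int (K div mt j) * (int (mt j) * sv lam $ j div int K) = sv lam $ j" for j
    by (rule AR[OF mtpos mt_dvd _ K_pos]) (use assms in \<open>simp add: Gd_def\<close>)
  then show ?thesis by (simp add: vec_eq_iff atv_def rho_def)
qed

lemma svQ: "sv lam v* Q = av lam"
  unfolding sv_def by (simp add: vector_matrix_mul_assoc PQ)

lemma gbar_eq: assumes "lam \<in> Gd" shows "gbar sc \<sigma> m \<zeta> lam = gbar sc tP mt \<zeta> (rho lam)"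
proof -
  have "eigz sc z \<sigma> (av lam) x \<longleftrightarrow> eigz sc z tP (sv lam) x" for x
  proof
    assume "eigz sc z \<sigma> (av lam) x" then show "eigz sc z tP (sv lam) x"
      unfolding sv_def by (rule EZ1)
  next
    assume "eigz sc z tP (sv lam) x" then show "eigz sc z \<sigma> (av lam) x"
      using EZ2 svQ by metis
  qed
  then show ?thesis unfolding gbar_eig gbarP_eig at_rho[OF assms] by blast
qed

lemma Gd_of_nz:
  assumes "x \<in> gbar sc \<sigma> m \<zeta> lam" "x \<noteq> 0" shows "lam \<in> Gd"
proof -
  have e: "eigz sc z tP (sv lam) x" using assms(1) unfolding gbar_eig sv_def by (simp add: EZ1)
  have "int K dvd int (mt j) * (sv lam)$j" for j
    by (rule period[OF e assms(2) mtper]) (use good_tP scomm_tP in \<open>auto simp: good_def\<close>)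
  then show ?thesis by (simp add: Gd_def)
qed

lemma sv_add: "sv (a + b) = sv a + sv b"
  unfolding sv_def
proof -
  have "av (a + b) = av a + av b" by (simp add: av_def vec_eq_iff algebra_simps)
  then show "av (a + b) v* P = av a v* P + av b v* P" by (simp add: vector_matrix_left_distrib)
qed

lemma sv_zero: "sv 0 = 0"
proof -
  have "av 0 = 0" by (simp add: av_def vec_eq_iff)
  then show ?thesis by (simp add: sv_def)
qed

lemma sv_neg: "sv (- a) = - sv a"
proof -
  have "sv (- a) + sv a = sv (-a + a)" by (simp only: sv_add)
  then have "sv (- a) + sv a = 0" by (simp add: sv_zero)
  then show ?thesis by (simp add: eq_neg_iff_add_eq_0)
qed

lemma Gd_zero: "0 \<in> Gd" by (simp add: Gd_def sv_zero)

lemma Gd_add: "a \<in> Gd \<Longrightarrow> b \<in> Gd \<Longrightarrow> a + b \<in> Gd"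
  by (simp add: Gd_def sv_add distrib_left)

lemma Gd_neg: "a \<in> Gd \<Longrightarrow> - a \<in> Gd"
  by (simp add: Gd_def sv_neg)

lemma zgen_Gd: "S \<subseteq> Gd \<Longrightarrow> zgen S \<subseteq> Gd"
proof
  fix x assume S: "S \<subseteq> Gd" and "x \<in> zgen S"
  from \<open>x \<in> zgen S\<close> show "x \<in> Gd"
    by (induction rule: zgen.induct) (use S in \<open>auto intro: Gd_zero Gd_add Gd_neg\<close>)
qed

lemma rho_add: assumes "a \<in> Gd" "b \<in> Gd" shows "rho (a + b) = rho a + rho b"
proof -
  have "(int (mt j) * sv a $ j + int (mt j) * sv b $ j) div int K
      = int (mt j) * sv a $ j div int K + int (mt j) * sv b $ j div int K" for j
    by (rule div_plus_div_distrib_dvd_left) (use assms in \<open>simp add: Gd_def\<close>)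
  then show ?thesis by (simp add: rho_def vec_eq_iff sv_add distrib_left)
qed

lemma rho_inj: "inj_on rho Gd"
proof
  fix a b assume a: "a \<in> Gd" and b: "b \<in> Gd" and e: "rho a = rho b"
  have "sv a = sv b" using at_rho[OF a] at_rho[OF b] e by simp
  then have "av a = av b" using svQ by metis
  then have eq: "int (K div m i) * a$i = int (K div m i) * b$i" for i by (simp add: av_def vec_eq_iff)
  have pos: "int (K div m i) \<noteq> 0" for i
    using m_dvd[of i] K_pos by (auto simp: dvd_div_eq_0_iff)
  have "a$i = b$i" for i using eq[of i] pos[of i] by simp
  then show "a = b" by (simp add: vec_eq_iff)
qed

lemma surj_pt:
  assumes "x \<noteq> 0" "x \<in> gbar sc tP mt \<zeta> lam'"
  shows "\<exists>\<mu>\<in>Gd. rho \<mu> = lam' \<and> x \<in> gbar sc \<sigma> m \<zeta> \<mu>"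
proof -
  define u where "u = atv lam' v* Q"
  have eu: "eigz sc z \<sigma> u x" unfolding u_def by (rule EZ2) (use assms(2) in \<open>simp add: gbarP_eig\<close>)
  have dv: "int K dvd int (m i) * u$i" for i
    by (rule period[OF eu assms(1) mper]) (use g\<sigma> s\<sigma> in \<open>auto simp: good_def\<close>)
  define \<mu> where "\<mu> = (\<chi> i. int (m i) * u$i div int K)"
  have amu: "av \<mu> = u"
  proof -
    have "int (K div m i) * (int (m i) * u$i div int K) = u$i" for i
      by (rule AR[OF mpos m_dvd dv K_pos])
    then show ?thesis by (simp add: av_def \<mu>_def vec_eq_iff)
  qed
  have smu: "sv \<mu> = atv lam'"
    unfolding sv_def amu u_def by (simp add: vector_matrix_mul_assoc QP)
  have k: "int (mt j) * (sv \<mu>)$j = int K * lam'$j" for j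
    unfolding smu atv_def using AR2[OF mt_dvd] by simp
  have inG: "\<mu> \<in> Gd" unfolding Gd_def using k by simp
  have "rho \<mu> = lam'" using k K_pos by (simp add: rho_def vec_eq_iff)
  moreover have "x \<in> gbar sc \<sigma> m \<zeta> \<mu>" unfolding gbar_eig amu using eu by simp
  ultimately show ?thesis using inG by blast
qed

end

context VS begin
lemma span_nz: assumes "v \<in> span A" "v \<noteq> 0" shows "\<exists>a\<in>A. a \<noteq> 0"
proof (rule ccontr)
  assume "\<not> (\<exists>a\<in>A. a \<noteq> 0)"
  then have "A \<subseteq> {0}" by auto
  then have "span A \<subseteq> {0}" by (rule span_minimal) simp
  then show False using assms by auto
qed
end

locale MLB = MLA sc \<sigma> m mt \<zeta> P Q for sc :: "'k::field \<Rightarrow> 'g::ab_group_add \<Rightarrow> 'g"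
  and \<sigma> :: "'n::finite \<Rightarrow> 'g \<Rightarrow> 'g" and m mt \<zeta> P Q +
  fixes br :: "'g \<Rightarrow> 'g \<Rightarrow> 'g" and H :: "'g set"
  assumes br0: "\<And>x. br x 0 = 0"
begin

abbreviation "L1 \<equiv> multiloop sc br \<sigma> m \<zeta> H"
abbreviation "L2 \<equiv> multiloop sc br tP mt \<zeta> H"
abbreviation "G0 \<equiv> zgen (supp_Zn L1)"
abbreviation "U1 \<mu> \<equiv> (\<Union>\<alpha>\<in>Qroot sc br H. wspace sc br H \<alpha> \<inter> gbar sc \<sigma> m \<zeta> \<mu>)"
abbreviation "U2 \<mu> \<equiv> (\<Union>\<alpha>\<in>Qroot sc br H. wspace sc br H \<alpha> \<inter> gbar sc tP mt \<zeta> \<mu>)"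

definition ind :: "int^'n \<Rightarrow> 'g \<Rightarrow> int^'n \<Rightarrow> 'g" where
  "ind \<mu> y = (\<lambda>\<nu>. if \<nu> = \<mu> then y else 0)"

lemma L1_iff: "f \<in> L1 \<longleftrightarrow> finite {\<mu>. f \<mu> \<noteq> 0} \<and> (\<forall>\<mu>. f \<mu> \<in> span (U1 \<mu>))"
  by (simp add: multiloop_def)

lemma L2_iff: "f \<in> L2 \<longleftrightarrow> finite {\<mu>. f \<mu> \<noteq> 0} \<and> (\<forall>\<mu>. f \<mu> \<in> span (U2 \<mu>))"
  by (simp add: multiloop_def)

lemma ind_L1: assumes "y \<in> U1 \<mu>" shows "ind \<mu> y \<in> L1"
proof -
  have "{\<nu>. ind \<mu> y \<nu> \<noteq> 0} \<subseteq> {\<mu>}" by (auto simp: ind_def)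
  then have "finite {\<nu>. ind \<mu> y \<nu> \<noteq> 0}" by (rule finite_subset) simp
  moreover have "ind \<mu> y \<nu> \<in> span (U1 \<nu>)" for \<nu>
    using assms by (auto simp: ind_def span_zero intro: span_base)
  ultimately show ?thesis by (simp add: L1_iff)
qed

lemma supp_sub: "supp_Zn L1 \<subseteq> Gd"
proof
  fix lam assume "lam \<in> supp_Zn L1"
  then obtain f where f: "f \<in> L1" "f lam \<noteq> 0" by (auto simp: supp_Zn_def)
  then have "f lam \<in> span (U1 lam)" by (simp add: L1_iff)
  then obtain y where "y \<in> U1 lam" "y \<noteq> 0" using span_nz f(2) by blast
  then show "lam \<in> Gd" using Gd_of_nz by blast
qed

lemma G0_sub: "G0 \<subseteq> Gd" by (rule zgen_Gd[OF supp_sub])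

lemma in_supp: "y \<in> U1 \<mu> \<Longrightarrow> y \<noteq> 0 \<Longrightarrow> \<mu> \<in> supp_Zn L1"
  unfolding supp_Zn_def using ind_L1[of y \<mu>] by (auto simp: ind_def intro!: bexI[of _ "ind \<mu> y"])

lemma in_G0: "y \<in> U1 \<mu> \<Longrightarrow> y \<noteq> 0 \<Longrightarrow> \<mu> \<in> G0"
  using in_supp zgen.zg_gen by blast

lemma key2:
  assumes "y \<noteq> 0" "y \<in> wspace sc br H \<alpha>" "y \<in> gbar sc tP mt \<zeta> lam" "\<alpha> \<in> Qroot sc br H"
  shows "lam \<in> rho ` G0"
proof -
  obtain \<mu> where mu: "\<mu> \<in> Gd" "rho \<mu> = lam" "y \<in> gbar sc \<sigma> m \<zeta> \<mu>"
    using surj_pt[OF assms(1,3)] by blast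
  have "y \<in> U1 \<mu>" using assms(2,4) mu(3) by blast
  then have "\<mu> \<in> G0" using in_G0 assms(1) by blast
  then show ?thesis using mu(2) by blast
qed

lemma U12: assumes "\<mu> \<in> Gd" shows "U1 \<mu> = U2 (rho \<mu>)"
  using gbar_eq[OF assms] by simp

lemma L2_supp: assumes "g \<in> L2" "g \<nu> \<noteq> 0" shows "\<nu> \<in> rho ` G0"
proof -
  have "g \<nu> \<in> span (U2 \<nu>)" using assms(1) by (simp add: L2_iff)
  then obtain y where "y \<in> U2 \<nu>" "y \<noteq> 0" using span_nz assms(2) by blast
  then show ?thesis using key2 by blast
qed

lemma L1_supp: assumes "f \<in> L1" "f \<mu> \<noteq> 0" shows "\<mu> \<in> G0"
  using assms by (auto simp: supp_Zn_def intro: zgen.zg_gen)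

lemma rho_inj0: "inj_on rho G0" using rho_inj G0_sub inj_on_subset by blast

definition phi :: "(int^'n \<Rightarrow> 'g) \<Rightarrow> int^'n \<Rightarrow> 'g" where
  "phi f = (\<lambda>\<nu>. if \<nu> \<in> rho ` G0 then f (the_inv_into G0 rho \<nu>) else 0)"

definition psi :: "(int^'n \<Rightarrow> 'g) \<Rightarrow> int^'n \<Rightarrow> 'g" where
  "psi g = (\<lambda>\<mu>. if \<mu> \<in> G0 then g (rho \<mu>) else 0)"

lemma phi_rho: "\<mu> \<in> G0 \<Longrightarrow> phi f (rho \<mu>) = f \<mu>"
  unfolding phi_def using the_inv_into_f_f[OF rho_inj0] by auto

lemma phi_out: "\<nu> \<notin> rho ` G0 \<Longrightarrow> phi f \<nu> = 0"
  unfolding phi_def by auto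

lemma phi_L2: assumes "f \<in> L1" shows "phi f \<in> L2"
proof -
  have "{\<nu>. phi f \<nu> \<noteq> 0} \<subseteq> rho ` {\<mu>. f \<mu> \<noteq> 0}"
  proof
    fix \<nu> assume "\<nu> \<in> {\<nu>. phi f \<nu> \<noteq> 0}"
    then have h: "phi f \<nu> \<noteq> 0" by simp
    then obtain \<mu> where "\<mu> \<in> G0" "\<nu> = rho \<mu>" using phi_out by blast
    then show "\<nu> \<in> rho ` {\<mu>. f \<mu> \<noteq> 0}" using h phi_rho by auto
  qed
  moreover have "finite {\<mu>. f \<mu> \<noteq> 0}" using assms by (simp add: L1_iff)
  ultimately have fin: "finite {\<nu>. phi f \<nu> \<noteq> 0}" using finite_subset by blast
  have "phi f \<nu> \<in> span (U2 \<nu>)" for \<nu>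
  proof (cases "\<nu> \<in> rho ` G0")
    case True
    then obtain \<mu> where mu: "\<mu> \<in> G0" "\<nu> = rho \<mu>" by blast
    then have "phi f \<nu> = f \<mu>" using phi_rho by simp
    moreover have "f \<mu> \<in> span (U1 \<mu>)" using assms by (simp add: L1_iff)
    ultimately show ?thesis using U12 mu G0_sub by auto
  next
    case False then show ?thesis using phi_out span_zero by simp
  qed
  then show ?thesis using fin by (simp add: L2_iff)
qed

lemma psi_L1: assumes "g \<in> L2" shows "psi g \<in> L1"
proof -
  have "rho ` {\<mu>. psi g \<mu> \<noteq> 0} \<subseteq> {\<nu>. g \<nu> \<noteq> 0}" by (auto simp: psi_def split: if_splits)
  moreover have "finite {\<nu>. g \<nu> \<noteq> 0}" using assms by (simp add: L2_iff)
  ultimately have "finite (rho ` {\<mu>. psi g \<mu> \<noteq> 0})" using finite_subset by blast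
  moreover have "inj_on rho {\<mu>. psi g \<mu> \<noteq> 0}"
    using rho_inj0 by (rule inj_on_subset) (auto simp: psi_def split: if_splits)
  ultimately have fin: "finite {\<mu>. psi g \<mu> \<noteq> 0}" using finite_imageD by blast
  have "psi g \<mu> \<in> span (U1 \<mu>)" for \<mu>
  proof (cases "\<mu> \<in> G0")
    case True
    then have "psi g \<mu> = g (rho \<mu>)" by (simp add: psi_def)
    moreover have "g (rho \<mu>) \<in> span (U2 (rho \<mu>))" using assms by (simp add: L2_iff)
    ultimately show ?thesis using U12 True G0_sub by auto
  next
    case False then show ?thesis by (simp add: psi_def span_zero)
  qed
  then show ?thesis using fin by (simp add: L1_iff)
qed

lemma psi_phi: assumes "f \<in> L1" shows "psi (phi f) = f"
proof
  fix \<mu> show "psi (phi f) \<mu> = f \<mu>"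
    using phi_rho L1_supp[OF assms] by (cases "\<mu> \<in> G0") (auto simp: psi_def)
qed

lemma phi_psi: assumes "g \<in> L2" shows "phi (psi g) = g"
proof
  fix \<nu> show "phi (psi g) \<nu> = g \<nu>"
  proof (cases "\<nu> \<in> rho ` G0")
    case True
    then obtain \<mu> where "\<mu> \<in> G0" "\<nu> = rho \<mu>" by blast
    then show ?thesis using phi_rho by (simp add: psi_def)
  next
    case False then show ?thesis using phi_out L2_supp[OF assms] by metis
  qed
qed

lemma phi_bij: "bij_betw phi L1 L2"
  by (rule bij_betw_byWitness[where f'=psi]) (use psi_phi phi_psi phi_L2 psi_L1 in auto)

lemma phi_add: "phi (ladd f g) = ladd (phi f) (phi g)"
  by (auto simp: phi_def ladd_def fun_eq_iff)

lemma phi_sc: "phi (lsc sc c f) = lsc sc c (phi f)"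
  by (auto simp: phi_def lsc_def fun_eq_iff)

end

context MLB begin

lemma G0_diff: "a \<in> G0 \<Longrightarrow> b \<in> G0 \<Longrightarrow> a - b \<in> G0"
  using zgen.zg_add[OF _ zgen.zg_neg, of a _ b] by simp

lemma rho_diff: assumes "a \<in> G0" "b \<in> G0" shows "rho (a - b) = rho a - rho b"
proof -
  have "a - b \<in> Gd" "b \<in> Gd" using G0_diff[OF assms] assms(2) G0_sub by auto
  then have "rho ((a - b) + b) = rho (a - b) + rho b" by (rule rho_add)
  then show ?thesis by simp
qed

lemma phi_br: assumes f: "f \<in> L1" and g: "g \<in> L1"
  shows "phi (lbr br f g) = lbr br (phi f) (phi g)"
proof
  fix \<nu>'
  define Fs where "Fs = {l. f l \<noteq> 0}"
  have FsG: "Fs \<subseteq> G0" using L1_supp[OF f] by (auto simp: Fs_def)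
  have injF: "inj_on rho Fs" using rho_inj0 FsG inj_on_subset by blast
  have supp: "{l'. phi f l' \<noteq> 0} = rho ` Fs"
  proof
    show "{l'. phi f l' \<noteq> 0} \<subseteq> rho ` Fs"
    proof
      fix \<nu> assume "\<nu> \<in> {l'. phi f l' \<noteq> 0}"
      then have h: "phi f \<nu> \<noteq> 0" by simp
      then obtain \<mu> where "\<mu> \<in> G0" "\<nu> = rho \<mu>" using phi_out by blast
      then show "\<nu> \<in> rho ` Fs" using h phi_rho by (auto simp: Fs_def)
    qed
    show "rho ` Fs \<subseteq> {l'. phi f l' \<noteq> 0}" using FsG phi_rho by (auto simp: Fs_def)
  qed
  have R: "lbr br (phi f) (phi g) \<nu>' = (\<Sum>l\<in>Fs. br (f l) (phi g (\<nu>' - rho l)))"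
  proof -
    have "lbr br (phi f) (phi g) \<nu>' = (\<Sum>l'\<in>rho ` Fs. br (phi f l') (phi g (\<nu>' - l')))"
      unfolding lbr_def supp ..
    also have "\<dots> = (\<Sum>l\<in>Fs. br (phi f (rho l)) (phi g (\<nu>' - rho l)))"
      by (rule sum.reindex[OF injF, unfolded comp_def])
    also have "\<dots> = (\<Sum>l\<in>Fs. br (f l) (phi g (\<nu>' - rho l)))"
      by (rule sum.cong) (use FsG phi_rho in auto)
    finally show ?thesis .
  qed
  show "phi (lbr br f g) \<nu>' = lbr br (phi f) (phi g) \<nu>'"
  proof (cases "\<nu>' \<in> rho ` G0")
    case True
    then obtain \<nu> where nu: "\<nu> \<in> G0" "\<nu>' = rho \<nu>" by blast
    have "phi (lbr br f g) \<nu>' = lbr br f g \<nu>" using nu phi_rho by simp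
    also have "\<dots> = (\<Sum>l\<in>Fs. br (f l) (g (\<nu> - l)))" by (simp add: lbr_def Fs_def)
    also have "\<dots> = (\<Sum>l\<in>Fs. br (f l) (phi g (\<nu>' - rho l)))"
    proof (rule sum.cong)
      fix l assume "l \<in> Fs"
      then have l: "l \<in> G0" using FsG by auto
      have "phi g (\<nu>' - rho l) = phi g (rho (\<nu> - l))" using rho_diff[OF nu(1) l] nu(2) by simp
      also have "\<dots> = g (\<nu> - l)" using phi_rho G0_diff[OF nu(1) l] by simp
      finally show "br (f l) (g (\<nu> - l)) = br (f l) (phi g (\<nu>' - rho l))" by simp
    qed simp
    finally show ?thesis using R by simp
  next
    case False
    have "phi g (\<nu>' - rho l) = 0" if "l \<in> Fs" for l
    proof (rule phi_out, rule notI)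
      assume "\<nu>' - rho l \<in> rho ` G0"
      then obtain \<mu> where mu: "\<mu> \<in> G0" "\<nu>' - rho l = rho \<mu>" by blast
      have l: "l \<in> G0" using that FsG by auto
      have "rho (\<mu> + l) = rho \<mu> + rho l" using rho_add mu(1) l G0_sub by auto
      then have "\<nu>' = rho (\<mu> + l)" using mu(2) by (simp add: algebra_simps)
      moreover have "\<mu> + l \<in> G0" using mu(1) l by (rule zgen.zg_add)
      ultimately show False using False by blast
    qed
    then have "(\<Sum>l\<in>Fs. br (f l) (phi g (\<nu>' - rho l))) = 0" by (simp add: br0)
    then show ?thesis using R False phi_out by simp
  qed
qed

lemma zero_W: "0 \<in> wspace sc br H \<alpha>"
  by (simp add: wspace_def br0)

lemma zero_gbarP: "0 \<in> gbar sc tP mt \<zeta> lam"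
proof -
  have "tP j 0 = 0" for j using scomm_tP[of j] unfolding scomm_def by (metis scale_zero_left)
  then show ?thesis by (simp add: gbar_def)
qed

lemma comp:
  assumes "\<alpha> \<in> Qroot sc br H"
  shows "phi ` regraded_comp (mlcomp sc br \<sigma> m \<zeta> H \<alpha>) G0 rho lam = mlcomp sc br tP mt \<zeta> H \<alpha> lam"
proof (cases "lam \<in> rho ` G0")
  case True
  then obtain \<mu> where mu: "\<mu> \<in> G0" "lam = rho \<mu>" by blast
  have ti: "the_inv_into G0 rho lam = \<mu>" using mu the_inv_into_f_f[OF rho_inj0] by simp
  have ge: "gbar sc \<sigma> m \<zeta> \<mu> = gbar sc tP mt \<zeta> lam" using gbar_eq mu G0_sub by auto
  have phi_pt: "phi f \<nu> = (if \<nu> = lam then f \<mu> else 0)"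
    if "\<forall>\<nu>. \<nu> \<noteq> \<mu> \<longrightarrow> f \<nu> = 0" for f \<nu>
  proof (cases "\<nu> \<in> rho ` G0")
    case True
    then obtain \<mu>' where mu': "\<mu>' \<in> G0" "\<nu> = rho \<mu>'" by blast
    then have e: "phi f \<nu> = f \<mu>'" using phi_rho by simp
    show ?thesis
    proof (cases "\<mu>' = \<mu>")
      case True then show ?thesis using e mu mu' by simp
    next
      case F: False
      then have "\<nu> \<noteq> lam" using inj_onD[OF rho_inj0, of \<mu>' \<mu>] mu mu' by auto
      then show ?thesis using e that F by simp
    qed
  next
    case False then show ?thesis using phi_out mu by auto
  qed
  have "phi ` mlcomp sc br \<sigma> m \<zeta> H \<alpha> \<mu> = mlcomp sc br tP mt \<zeta> H \<alpha> lam"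
  proof
    show "phi ` mlcomp sc br \<sigma> m \<zeta> H \<alpha> \<mu> \<subseteq> mlcomp sc br tP mt \<zeta> H \<alpha> lam"
    proof
      fix h assume "h \<in> phi ` mlcomp sc br \<sigma> m \<zeta> H \<alpha> \<mu>"
      then obtain f where f: "f \<in> mlcomp sc br \<sigma> m \<zeta> H \<alpha> \<mu>" "h = phi f" by blast
      then have fz: "\<forall>\<nu>. \<nu> \<noteq> \<mu> \<longrightarrow> f \<nu> = 0" by (simp add: mlcomp_def)
      show "h \<in> mlcomp sc br tP mt \<zeta> H \<alpha> lam"
        using f fz phi_pt[OF fz] ge by (simp add: mlcomp_def)
    qed
    show "mlcomp sc br tP mt \<zeta> H \<alpha> lam \<subseteq> phi ` mlcomp sc br \<sigma> m \<zeta> H \<alpha> \<mu>"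
    proof
      fix h assume h: "h \<in> mlcomp sc br tP mt \<zeta> H \<alpha> lam"
      define f where "f = ind \<mu> (h lam)"
      have fz: "\<forall>\<nu>. \<nu> \<noteq> \<mu> \<longrightarrow> f \<nu> = 0" by (simp add: f_def ind_def)
      have "f \<in> mlcomp sc br \<sigma> m \<zeta> H \<alpha> \<mu>" using h ge by (simp add: mlcomp_def f_def ind_def)
      moreover have "h = phi f"
      proof
        fix \<nu> show "h \<nu> = phi f \<nu>" using phi_pt[OF fz, of \<nu>] h by (auto simp: mlcomp_def f_def ind_def)
      qed
      ultimately show "h \<in> phi ` mlcomp sc br \<sigma> m \<zeta> H \<alpha> \<mu>" by blast
    qed
  qed
  then show ?thesis using True ti by (simp add: regraded_comp_def)
next
  case False
  have "mlcomp sc br tP mt \<zeta> H \<alpha> lam = {\<lambda>_. 0}"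
  proof
    show "mlcomp sc br tP mt \<zeta> H \<alpha> lam \<subseteq> {\<lambda>_. 0}"
    proof
      fix h assume h: "h \<in> mlcomp sc br tP mt \<zeta> H \<alpha> lam"
      have "h lam = 0"
      proof (rule ccontr)
        assume "h lam \<noteq> 0"
        then have "lam \<in> rho ` G0" using key2[of "h lam" \<alpha> lam] h assms by (simp add: mlcomp_def)
        then show False using False by simp
      qed
      then show "h \<in> {\<lambda>_. 0}" using h by (auto simp: mlcomp_def fun_eq_iff)
    qed
    show "{\<lambda>_. 0} \<subseteq> mlcomp sc br tP mt \<zeta> H \<alpha> lam"
      using zero_W zero_gbarP by (simp add: mlcomp_def)
  qed
  moreover have "phi (\<lambda>_. 0) = (\<lambda>_. 0)" by (simp add: phi_def fun_eq_iff)
  ultimately show ?thesis using False by (simp add: regraded_comp_def)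
qed

end

context MLA begin
lemma fix_eq: "fixpts \<sigma> = fixpts tP"
proof -
  have e: "x \<in> fixpts \<tau> \<longleftrightarrow> eigz sc z \<tau> 0 x" for x and \<tau> :: "'n \<Rightarrow> 'g \<Rightarrow> 'g"
    by (simp add: fixpts_def eigz_def)
  show ?thesis
  proof (intro set_eqI iffI)
    fix x assume "x \<in> fixpts \<sigma>"
    then have "eigz sc z tP (0 v* P) x" using e EZ1 by blast
    then show "x \<in> fixpts tP" using e by simp
  next
    fix x assume "x \<in> fixpts tP"
    then have "eigz sc z \<sigma> (0 v* Q) x" using e EZ2 by blast
    then show "x \<in> fixpts \<sigma>" using e by simp
  qed
qed
end

theorem lemma4p2p3:
  fixes sc :: "'k::field_char_0 \<Rightarrow> 'g::ab_group_add \<Rightarrow> 'g"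
    and br :: "'g \<Rightarrow> 'g \<Rightarrow> 'g"
    and \<sigma> :: "'n::finite \<Rightarrow> 'g \<Rightarrow> 'g"
    and m mt :: "'n \<Rightarrow> nat"
    and \<zeta> :: "nat \<Rightarrow> 'k"
    and H :: "'g set"
    and P :: "int^'n^'n"
  assumes "alg_closed_field TYPE('k)"
    and "compatible_roots_of_unity \<zeta>"
    and "simple_lie sc br"
    and "\<forall>i. lie_aut sc br (\<sigma> i)"
    and "\<forall>i j. \<sigma> i \<circ> \<sigma> j = \<sigma> j \<circ> \<sigma> i"
    and "\<forall>i. 0 < m i"
    and "\<forall>i. \<sigma> i ^^ m i = id"
    and "cartan_subalg sc br (fixpts \<sigma>) H"
    and "invertible P"
    and "\<forall>j. 0 < mt j"
    and "\<forall>j. sigmaP \<sigma> P j ^^ mt j = id"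
  shows "fixpts \<sigma> = fixpts (sigmaP \<sigma> P) \<and>
    (\<exists>\<rho>. group_mono_on (zgen (supp_Zn (multiloop sc br \<sigma> m \<zeta> H))) \<rho> \<and>
      (\<exists>\<phi>. lie_iso_between sc br (multiloop sc br \<sigma> m \<zeta> H) (multiloop sc br (sigmaP \<sigma> P) mt \<zeta> H) \<phi> \<and>
        (\<forall>\<alpha>\<in>Qroot sc br H. \<forall>lam.
           \<phi> ` regraded_comp (mlcomp sc br \<sigma> m \<zeta> H \<alpha>) (zgen (supp_Zn (multiloop sc br \<sigma> m \<zeta> H))) \<rho> lam
           = mlcomp sc br (sigmaP \<sigma> P) mt \<zeta> H \<alpha> lam)))"
proof -
  have vs: "vector_space sc" using assms(3) by (simp add: simple_lie_def lie_algebra_def)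
  have br0: "br x 0 = 0" for x
  proof -
    have "Vector_Spaces.linear sc sc (br x)" using assms(3) by (simp add: simple_lie_def lie_algebra_def)
    then show ?thesis using module_hom.zero module_hom_linearI by blast
  qed
  have bij: "bij (\<sigma> i)" for i using assms(4) by (simp add: lie_aut_def)
  have g: "good \<sigma>" using bij assms(5) by (simp add: good_def)
  have sc: "scomm sc (\<sigma> i)" for i
  proof -
    have "Vector_Spaces.linear sc sc (\<sigma> i)" using assms(4) by (simp add: lie_aut_def)
    then have "module_hom sc sc (\<sigma> i)" by (rule module_hom_linearI)
    then show ?thesis unfolding scomm_def using module_hom.scale by blast
  qed
  obtain Q where PQ: "P ** Q = mat 1" and QP: "Q ** P = mat 1"
    using assms(9) unfolding invertible_def by blast
  interpret MLB sc \<sigma> m mt \<zeta> P Q br H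
  proof (unfold_locales)
    show "compatible_roots_of_unity \<zeta>" by (rule assms(2))
  qed (use vs g sc assms(6,7,10,11) PQ QP br0 in \<open>auto simp: vector_space_def\<close>)
  show ?thesis
  proof (intro conjI exI)
    show "fixpts \<sigma> = fixpts (sigmaP \<sigma> P)" by (rule fix_eq)
    show "group_mono_on G0 rho"
      unfolding group_mono_on_def using rho_add G0_sub rho_inj0 by blast
    show "lie_iso_between sc br L1 L2 phi"
      unfolding lie_iso_between_def using phi_bij phi_add phi_sc phi_br by blast
    show "\<forall>\<alpha>\<in>Qroot sc br H. \<forall>lam.
           phi ` regraded_comp (mlcomp sc br \<sigma> m \<zeta> H \<alpha>) G0 rho lam
           = mlcomp sc br (sigmaP \<sigma> P) mt \<zeta> H \<alpha> lam"
      using comp by blast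
  qed
qed

end
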